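(* Let $V$ be a simple vertex operator algebra and $G=\langle g\rangle$ a group of automorphisms of $V$ of prime order $p$. Let $1\le i\le p-1$, assume $V$ is $g^i$-rational, and let $M$ be an irreducible $g^i$-twisted $V$-module. Then $G_M=G$, and the eigenspaces on $M$ of an isomorphism $\phi(g):M\to M$ satisfying $\phi(g)Y_M(v,z)\phi(g)^{-1}=Y_M(gv,z)$ for all $v\in V$ are irreducible $V^G$-modules.
   Context: For $k\in G$, $M\circ k$ is $M$ with vertex operators $Y_{M\circ k}(v,z)=Y_M(kv,z)$, and $G_M=\{k\in G: M\circ k\cong M \text{ as } g^i\text{-twisted } V\text{-modules}\}$. $V^G$ is the fixed-point subalgebra; $V$ is $g^i$-rational if every admissible $g^i$-twisted $V$-module is a direct sum of irreducible ones. *)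

theory Defs
  imports Complex_Main "HOL-Computational_Algebra.Primes"
begin

text \<open>Vertex operators are encoded by their modes:  Y u n v  is  u_n v,  so that
  Y(u,z) v = sum_n (u_n v) z^(-n-1).\<close>

text \<open>Finite sum of a finitely supported family (all sums below have finite support
  by the truncation axioms).\<close>
definition fsum :: "(nat \<Rightarrow> 'a::comm_monoid_add) \<Rightarrow> 'a" where
  "fsum f = (\<Sum>i\<in>{i. f i \<noteq> 0}. f i)"

definition sgn_pow :: "int \<Rightarrow> complex" where
  "sgn_pow l = (if even l then 1 else -1)"

definition Lop :: "('v \<Rightarrow> int \<Rightarrow> 'v \<Rightarrow> 'v) \<Rightarrow> 'v \<Rightarrow> int \<Rightarrow> 'v \<Rightarrow> 'v" where
  "Lop Y om n = Y om (n + 1)"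

definition fin_dim :: "(complex \<Rightarrow> 'v::ab_group_add \<Rightarrow> 'v) \<Rightarrow> 'v set \<Rightarrow> bool" where
  "fin_dim s W \<longleftrightarrow> (\<exists>B. finite B \<and> W \<subseteq> module.span s B)"

text \<open>Vertex operator algebra (V, Y, 1, omega) of central charge c, in the sense of
  Frenkel--Lepowsky--Meurman, with the Jacobi identity in its equivalent mode form
  (Borcherds identity).\<close>
definition VOA :: "(complex \<Rightarrow> 'v::ab_group_add \<Rightarrow> 'v) \<Rightarrow> ('v \<Rightarrow> int \<Rightarrow> 'v \<Rightarrow> 'v)
    \<Rightarrow> 'v \<Rightarrow> 'v \<Rightarrow> complex \<Rightarrow> bool" where
  "VOA s Y vac om c \<longleftrightarrow>
     vector_space s \<and>
     (\<forall>n w. Vector_Spaces.linear s s (\<lambda>u. Y u n w)) \<and>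
     (\<forall>u n. Vector_Spaces.linear s s (Y u n)) \<and>
     (\<forall>u v. \<exists>N. \<forall>n\<ge>N. Y u n v = 0) \<and>
     (\<forall>n w. Y vac n w = (if n = -1 then w else 0)) \<and>
     (\<forall>u. Y u (-1) vac = u \<and> (\<forall>n\<ge>0. Y u n vac = 0)) \<and>
     (\<forall>u v w m n l.
        fsum (\<lambda>i. s (of_int m gchoose i) (Y (Y u (l + int i) v) (m + n - int i) w)) =
        fsum (\<lambda>i. s ((-1)^i * (of_int l gchoose i))
                    (Y u (m + l - int i) (Y v (n + int i) w)
                     - s (sgn_pow l) (Y v (l + n - int i) (Y u (m + int i) w))))) \<and>
     (\<forall>m n w. Lop Y om m (Lop Y om n w) - Lop Y om n (Lop Y om m w) =
        s (of_int (m - n)) (Lop Y om (m + n) w)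
        + (if m + n = 0 then s ((of_int m ^ 3 - of_int m) / 12 * c) w else 0)) \<and>
     (\<forall>u n w. Y (Lop Y om (-1) u) n w = s (- of_int n) (Y u (n - 1) w)) \<and>
     module.span s (\<Union>n::int. {v. Lop Y om 0 v = s (of_int n) v}) = UNIV \<and>
     (\<forall>n::int. fin_dim s {v. Lop Y om 0 v = s (of_int n) v}) \<and>
     (\<exists>N::int. \<forall>n<N. {v. Lop Y om 0 v = s (of_int n) v} = {0})"

definition simple_VOA :: "(complex \<Rightarrow> 'v::ab_group_add \<Rightarrow> 'v) \<Rightarrow> ('v \<Rightarrow> int \<Rightarrow> 'v \<Rightarrow> 'v)
    \<Rightarrow> bool" where
  "simple_VOA s Y \<longleftrightarrow>
     (\<forall>I. module.subspace s I \<and> (\<forall>u v n. v \<in> I \<longrightarrow> Y u n v \<in> I \<and> Y v n u \<in> I)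
        \<longrightarrow> I = {0} \<or> I = UNIV)"

definition VOA_aut :: "(complex \<Rightarrow> 'v::ab_group_add \<Rightarrow> 'v) \<Rightarrow> ('v \<Rightarrow> int \<Rightarrow> 'v \<Rightarrow> 'v)
    \<Rightarrow> 'v \<Rightarrow> ('v \<Rightarrow> 'v) \<Rightarrow> bool" where
  "VOA_aut s Y om g \<longleftrightarrow> Vector_Spaces.linear s s g \<and> bij g \<and>
     (\<forall>u n v. g (Y u n v) = Y (g u) n (g v)) \<and> g om = om"

definition tw_space :: "(complex \<Rightarrow> 'v \<Rightarrow> 'v) \<Rightarrow> ('v \<Rightarrow> 'v) \<Rightarrow> nat \<Rightarrow> int \<Rightarrow> 'v set" where
  "tw_space s h T r = {v. h v = s (cis (- 2 * pi * of_int r / of_nat T)) v}"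

text \<open>Weak h-twisted V-module (Dong--Li--Mason), h of order T; modes indexed by rationals:
  YM v n w = v_n w, with Y_M(v,z) = sum_(n in Q) v_n z^(-n-1).  The twisted Jacobi
  identity is stated in its equivalent mode (twisted Borcherds) form.\<close>
definition weak_tw_module :: "(complex \<Rightarrow> 'v::ab_group_add \<Rightarrow> 'v) \<Rightarrow> ('v \<Rightarrow> int \<Rightarrow> 'v \<Rightarrow> 'v)
    \<Rightarrow> 'v \<Rightarrow> ('v \<Rightarrow> 'v) \<Rightarrow> nat
    \<Rightarrow> (complex \<Rightarrow> 'm::ab_group_add \<Rightarrow> 'm) \<Rightarrow> ('v \<Rightarrow> rat \<Rightarrow> 'm \<Rightarrow> 'm) \<Rightarrow> bool" where
  "weak_tw_module s Y vac h T sM YM \<longleftrightarrow>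
     vector_space sM \<and>
     (\<forall>n w. Vector_Spaces.linear s sM (\<lambda>u. YM u n w)) \<and>
     (\<forall>u n. Vector_Spaces.linear sM sM (YM u n)) \<and>
     (\<forall>r u n. u \<in> tw_space s h T r \<longrightarrow> \<not> (\<exists>k::int. n = of_int r / of_nat T + of_int k)
        \<longrightarrow> (\<forall>w. YM u n w = 0)) \<and>
     (\<forall>u w. \<exists>N::rat. \<forall>n\<ge>N. YM u n w = 0) \<and>
     (\<forall>n w. YM vac n w = (if n = -1 then w else 0)) \<and>
     (\<forall>r u v w (m::rat) (n::rat) (l::int).
        u \<in> tw_space s h T r \<longrightarrow> (\<exists>k::int. m = of_int r / of_nat T + of_int k) \<longrightarrow>
        fsum (\<lambda>i. sM (of_rat (m gchoose i)) (YM (Y u (l + int i) v) (m + n - of_nat i) w)) =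
        fsum (\<lambda>i. sM ((-1)^i * (of_int l gchoose i))
                    (YM u (m + of_int l - of_nat i) (YM v (n + of_nat i) w)
                     - sM (sgn_pow l) (YM v (of_int l + n - of_nat i) (YM u (m + of_nat i) w)))))"

definition LM0 :: "'v \<Rightarrow> ('v \<Rightarrow> rat \<Rightarrow> 'm \<Rightarrow> 'm) \<Rightarrow> 'm \<Rightarrow> 'm" where
  "LM0 om YM = YM om 1"

definition tw_module :: "(complex \<Rightarrow> 'v::ab_group_add \<Rightarrow> 'v) \<Rightarrow> ('v \<Rightarrow> int \<Rightarrow> 'v \<Rightarrow> 'v)
    \<Rightarrow> 'v \<Rightarrow> 'v \<Rightarrow> ('v \<Rightarrow> 'v) \<Rightarrow> nat
    \<Rightarrow> (complex \<Rightarrow> 'm::ab_group_add \<Rightarrow> 'm) \<Rightarrow> ('v \<Rightarrow> rat \<Rightarrow> 'm \<Rightarrow> 'm) \<Rightarrow> bool" where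
  "tw_module s Y vac om h T sM YM \<longleftrightarrow>
     weak_tw_module s Y vac h T sM YM \<and>
     module.span sM (\<Union>lam. {w. LM0 om YM w = sM lam w}) = UNIV \<and>
     (\<forall>lam. fin_dim sM {w. LM0 om YM w = sM lam w}) \<and>
     (\<forall>lam. \<exists>N::int. \<forall>n<N. {w. LM0 om YM w = sM (lam + of_int n / of_nat T) w} = {0})"

definition irreducible_tw_module :: "(complex \<Rightarrow> 'v::ab_group_add \<Rightarrow> 'v) \<Rightarrow> ('v \<Rightarrow> int \<Rightarrow> 'v \<Rightarrow> 'v)
    \<Rightarrow> 'v \<Rightarrow> 'v \<Rightarrow> ('v \<Rightarrow> 'v) \<Rightarrow> nat
    \<Rightarrow> (complex \<Rightarrow> 'm::ab_group_add \<Rightarrow> 'm) \<Rightarrow> ('v \<Rightarrow> rat \<Rightarrow> 'm \<Rightarrow> 'm) \<Rightarrow> bool" where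
  "irreducible_tw_module s Y vac om h T sM YM \<longleftrightarrow>
     tw_module s Y vac om h T sM YM \<and> (UNIV :: 'm set) \<noteq> {0} \<and>
     (\<forall>W. module.subspace sM W \<and> (\<forall>u n. YM u n ` W \<subseteq> W) \<longrightarrow> W = {0} \<or> W = UNIV)"

definition admissible_tw_module :: "(complex \<Rightarrow> 'v::ab_group_add \<Rightarrow> 'v) \<Rightarrow> ('v \<Rightarrow> int \<Rightarrow> 'v \<Rightarrow> 'v)
    \<Rightarrow> 'v \<Rightarrow> 'v \<Rightarrow> ('v \<Rightarrow> 'v) \<Rightarrow> nat
    \<Rightarrow> (complex \<Rightarrow> 'm::ab_group_add \<Rightarrow> 'm) \<Rightarrow> ('v \<Rightarrow> rat \<Rightarrow> 'm \<Rightarrow> 'm) \<Rightarrow> (rat \<Rightarrow> 'm set)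
    \<Rightarrow> bool" where
  "admissible_tw_module s Y vac om h T sM YM grd \<longleftrightarrow>
     weak_tw_module s Y vac h T sM YM \<and>
     (\<forall>n. module.subspace sM (grd n)) \<and>
     (\<forall>n. \<not> (\<exists>k::nat. n = of_nat k / of_nat T) \<longrightarrow> grd n = {0}) \<and>
     module.span sM (\<Union>n. grd n) = UNIV \<and>
     (\<forall>F f. finite F \<and> (\<forall>n\<in>F. f n \<in> grd n) \<and> sum f F = 0 \<longrightarrow> (\<forall>n\<in>F. f n = 0)) \<and>
     (\<forall>u (k::int) m n. Lop Y om 0 u = s (of_int k) u \<longrightarrow>
        YM u m ` grd n \<subseteq> grd (of_int k - m - 1 + n))"

definition adm_submodule :: "(complex \<Rightarrow> 'm::ab_group_add \<Rightarrow> 'm) \<Rightarrow> ('v \<Rightarrow> rat \<Rightarrow> 'm \<Rightarrow> 'm)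
    \<Rightarrow> (rat \<Rightarrow> 'm set) \<Rightarrow> 'm set \<Rightarrow> bool" where
  "adm_submodule sM YM grd W \<longleftrightarrow> module.subspace sM W \<and> (\<forall>u n. YM u n ` W \<subseteq> W) \<and>
     W \<subseteq> module.span sM (\<Union>n. W \<inter> grd n)"

definition irr_adm_submodule :: "(complex \<Rightarrow> 'm::ab_group_add \<Rightarrow> 'm) \<Rightarrow> ('v \<Rightarrow> rat \<Rightarrow> 'm \<Rightarrow> 'm)
    \<Rightarrow> (rat \<Rightarrow> 'm set) \<Rightarrow> 'm set \<Rightarrow> bool" where
  "irr_adm_submodule sM YM grd W \<longleftrightarrow> adm_submodule sM YM grd W \<and> W \<noteq> {0} \<and>
     (\<forall>W'. W' \<subseteq> W \<and> adm_submodule sM YM grd W' \<longrightarrow> W' = {0} \<or> W' = W)"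

definition completely_reducible :: "(complex \<Rightarrow> 'm::ab_group_add \<Rightarrow> 'm) \<Rightarrow> ('v \<Rightarrow> rat \<Rightarrow> 'm \<Rightarrow> 'm)
    \<Rightarrow> (rat \<Rightarrow> 'm set) \<Rightarrow> bool" where
  "completely_reducible sM YM grd \<longleftrightarrow>
     (\<exists>\<W>. (\<forall>W\<in>\<W>. irr_adm_submodule sM YM grd W) \<and>
          module.span sM (\<Union>\<W>) = UNIV \<and>
          (\<forall>W\<in>\<W>. W \<inter> module.span sM (\<Union>(\<W> - {W})) = {0}))"

definition tw_rational :: "'w::ab_group_add itself \<Rightarrow> (complex \<Rightarrow> 'v::ab_group_add \<Rightarrow> 'v)
    \<Rightarrow> ('v \<Rightarrow> int \<Rightarrow> 'v \<Rightarrow> 'v) \<Rightarrow> 'v \<Rightarrow> 'v \<Rightarrow> ('v \<Rightarrow> 'v) \<Rightarrow> nat \<Rightarrow> bool" where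
  "tw_rational _ s Y vac om h T \<longleftrightarrow>
     (\<forall>(sM :: complex \<Rightarrow> 'w \<Rightarrow> 'w) YM grd.
        admissible_tw_module s Y vac om h T sM YM grd \<longrightarrow> completely_reducible sM YM grd)"

definition tw_iso :: "(complex \<Rightarrow> 'm::ab_group_add \<Rightarrow> 'm) \<Rightarrow> ('v \<Rightarrow> rat \<Rightarrow> 'm \<Rightarrow> 'm)
    \<Rightarrow> ('v \<Rightarrow> rat \<Rightarrow> 'm \<Rightarrow> 'm) \<Rightarrow> ('m \<Rightarrow> 'm) \<Rightarrow> bool" where
  "tw_iso sM YM1 YM2 f \<longleftrightarrow> Vector_Spaces.linear sM sM f \<and> bij f \<and>
     (\<forall>v n w. f (YM1 v n w) = YM2 v n (f w))"

definition compose_mod :: "('v \<Rightarrow> rat \<Rightarrow> 'm \<Rightarrow> 'm) \<Rightarrow> ('v \<Rightarrow> 'v) \<Rightarrow> 'v \<Rightarrow> rat \<Rightarrow> 'm \<Rightarrow> 'm" where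
  "compose_mod YM k = (\<lambda>v. YM (k v))"

definition stab_mod :: "(complex \<Rightarrow> 'm::ab_group_add \<Rightarrow> 'm) \<Rightarrow> ('v \<Rightarrow> rat \<Rightarrow> 'm \<Rightarrow> 'm)
    \<Rightarrow> ('v \<Rightarrow> 'v) set \<Rightarrow> ('v \<Rightarrow> 'v) set" where
  "stab_mod sM YM G = {k \<in> G. \<exists>f. tw_iso sM (compose_mod YM k) YM f}"

text \<open>A subspace W of M is an irreducible V^G-module (for the restricted vertex operators
  Y_M(v,z), v in V^G; these satisfy the module axioms automatically by restriction).\<close>
definition irr_fixed_submodule :: "(complex \<Rightarrow> 'm::ab_group_add \<Rightarrow> 'm) \<Rightarrow> ('v \<Rightarrow> rat \<Rightarrow> 'm \<Rightarrow> 'm)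
    \<Rightarrow> 'v set \<Rightarrow> 'm set \<Rightarrow> bool" where
  "irr_fixed_submodule sM YM VG W \<longleftrightarrow>
     module.subspace sM W \<and> W \<noteq> {0} \<and> (\<forall>u\<in>VG. \<forall>n. YM u n ` W \<subseteq> W) \<and>
     (\<forall>W'. W' \<subseteq> W \<and> module.subspace sM W' \<and> (\<forall>u\<in>VG. \<forall>n. YM u n ` W' \<subseteq> W')
        \<longrightarrow> W' = {0} \<or> W' = W)"

end

theory Submission
  imports Defs
begin


locale VM =
  fixes s :: "complex \<Rightarrow> 'v::ab_group_add \<Rightarrow> 'v"
    and Y :: "'v \<Rightarrow> int \<Rightarrow> 'v \<Rightarrow> 'v"
    and vac om :: 'v and c :: complex
    and h :: "'v \<Rightarrow> 'v" and p :: nat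
    and sM :: "complex \<Rightarrow> 'm::ab_group_add \<Rightarrow> 'm"
    and YM :: "'v \<Rightarrow> rat \<Rightarrow> 'm \<Rightarrow> 'm"
  assumes VOA: "VOA s Y vac om c"
    and aut: "VOA_aut s Y om h"
    and hp: "h ^^ p = id" and p0: "p > 0"
    and wtm: "weak_tw_module s Y vac h p sM YM"
begin

sublocale V: vector_space s using VOA unfolding VOA_def by auto
sublocale M: vector_space sM using wtm unfolding weak_tw_module_def by auto

lemma Y_addl: "Y (x + y) n w = Y x n w + Y y n w"
  and Y_scalel: "Y (s a x) n w = s a (Y x n w)"
proof -
  have "Vector_Spaces.linear s s (\<lambda>u. Y u n w)" using VOA unfolding VOA_def by auto
  then show "Y (x + y) n w = Y x n w + Y y n w" "Y (s a x) n w = s a (Y x n w)" unfolding Vector_Spaces.linear_iff by auto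
qed
lemma Y_addr: "Y u n (x + y) = Y u n x + Y u n y"
  and Y_scaler: "Y u n (s a x) = s a (Y u n x)"
proof -
  have "Vector_Spaces.linear s s (Y u n)" using VOA unfolding VOA_def by auto
  then show "Y u n (x + y) = Y u n x + Y u n y" "Y u n (s a x) = s a (Y u n x)" unfolding Vector_Spaces.linear_iff by auto
qed
lemma YM_addl: "YM (x + y) n w = YM x n w + YM y n w"
  and YM_scalel: "YM (s a x) n w = sM a (YM x n w)"
proof -
  have "Vector_Spaces.linear s sM (\<lambda>u. YM u n w)" using wtm unfolding weak_tw_module_def by auto
  then show "YM (x + y) n w = YM x n w + YM y n w" "YM (s a x) n w = sM a (YM x n w)" unfolding Vector_Spaces.linear_iff by auto
qed
lemma YM_addr: "YM u n (x + y) = YM u n x + YM u n y"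
  and YM_scaler: "YM u n (sM a x) = sM a (YM u n x)"
proof -
  have "Vector_Spaces.linear sM sM (YM u n)" using wtm unfolding weak_tw_module_def by auto
  then show "YM u n (x + y) = YM u n x + YM u n y" "YM u n (sM a x) = sM a (YM u n x)" unfolding Vector_Spaces.linear_iff by auto
qed
lemma h_add: "h (x + y) = h x + h y" and h_scale: "h (s a x) = s a (h x)"
proof -
  have "Vector_Spaces.linear s s h" using aut unfolding VOA_aut_def by auto
  then show "h (x + y) = h x + h y" "h (s a x) = s a (h x)" unfolding Vector_Spaces.linear_iff by auto
qed
lemma h_hom: "h (Y u n v) = Y (h u) n (h v)" and h_om: "h om = om" and h_bij: "bij h"
  using aut unfolding VOA_aut_def by auto

lemma Y_0l[simp]: "Y 0 n w = 0" by (metis add_cancel_right_right Y_addl)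
lemma Y_0r[simp]: "Y u n 0 = 0" by (metis add_cancel_right_right Y_addr)
lemma YM_0l[simp]: "YM 0 n w = 0" by (metis add_cancel_right_right YM_addl)
lemma YM_0r[simp]: "YM u n 0 = 0" by (metis add_cancel_right_right YM_addr)
lemma h_0[simp]: "h 0 = 0" by (metis add_cancel_right_right h_add)

lemma YM_suml: "YM (sum f A) n w = (\<Sum>a\<in>A. YM (f a) n w)"
  by (induction A rule: infinite_finite_induct) (auto simp: YM_addl)
lemma YM_sumr: "YM u n (sum f A) = (\<Sum>a\<in>A. YM u n (f a))"
  by (induction A rule: infinite_finite_induct) (auto simp: YM_addr)
lemma h_sum: "h (sum f A) = (\<Sum>a\<in>A. h (f a))"
  by (induction A rule: infinite_finite_induct) (auto simp: h_add)
lemma Y_suml: "Y (sum f A) n w = (\<Sum>a\<in>A. Y (f a) n w)"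
  by (induction A rule: infinite_finite_induct) (auto simp: Y_addl)
lemma Y_sumr: "Y u n (sum f A) = (\<Sum>a\<in>A. Y u n (f a))"
  by (induction A rule: infinite_finite_induct) (auto simp: Y_addr)

lemma Y_vac: "Y vac n w = (if n = -1 then w else 0)"
  and Y_create: "Y u (-1) vac = u" "n \<ge> 0 \<Longrightarrow> Y u n vac = 0"
  and Y_trunc: "\<exists>N. \<forall>n\<ge>N. Y u n v = 0"
  and Y_deriv: "Y (Lop Y om (-1) u) n w = s (- of_int n) (Y u (n - 1) w)"
  and Y_span: "V.span (\<Union>n::int. {v. Lop Y om 0 v = s (of_int n) v}) = UNIV"
  using VOA unfolding VOA_def by auto

lemma YM_coset: "u \<in> tw_space s h p r \<Longrightarrow> \<not> (\<exists>k::int. n = of_int r / of_nat p + of_int k) \<Longrightarrow> YM u n w = 0"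
  and YM_trunc: "\<exists>N::rat. \<forall>n\<ge>N. YM u n w = 0"
  and YM_vac: "YM vac n w = (if n = -1 then w else 0)"
  and YM_bor: "u \<in> tw_space s h p r \<Longrightarrow> (\<exists>k::int. m = of_int r / of_nat p + of_int k) \<Longrightarrow>
        fsum (\<lambda>i. sM (of_rat (m gchoose i)) (YM (Y u (l + int i) v) (m + n - of_nat i) w)) =
        fsum (\<lambda>i. sM ((-1)^i * (of_int l gchoose i))
                    (YM u (m + of_int l - of_nat i) (YM v (n + of_nat i) w)
                     - sM (sgn_pow l) (YM v (of_int l + n - of_nat i) (YM u (m + of_nat i) w))))"
  using wtm unfolding weak_tw_module_def by blast+

lemma hpow_add: "(h^^t) (x + y) = (h^^t) x + (h^^t) y"
  by (induction t) (auto simp: h_add)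
lemma hpow_scale: "(h^^t) (s a x) = s a ((h^^t) x)"
  by (induction t) (auto simp: h_scale)
lemma hpow_0[simp]: "(h^^t) 0 = 0"
  by (induction t) auto
lemma hpow_sum: "(h^^t) (sum f A) = (\<Sum>a\<in>A. (h^^t) (f a))"
  by (induction A rule: infinite_finite_induct) (auto simp: hpow_add)

definition proj :: "int \<Rightarrow> 'v \<Rightarrow> 'v" where
  "proj r v = s (1 / of_nat p) (\<Sum>t<p. s (cis (2 * pi * of_int r * of_nat t / of_nat p)) ((h^^t) v))"

lemma proj_tw: "proj r v \<in> tw_space s h p r"
proof -
  define F where "F t = s (cis (2 * pi * of_int r * of_nat t / of_nat p)) ((h^^t) v)" for t
  have Fp: "F p = F 0"
  proof -
    have "cis (2 * pi * of_int r * of_nat p / of_nat p) = cis (2 * pi * of_int r)" using p0 by simp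
    also have "... = 1" by (simp add: cis_multiple_2pi)
    finally show ?thesis unfolding F_def using hp by simp
  qed
  have shift: "(\<Sum>t<p. F (Suc t)) = (\<Sum>t<p. F t)"
  proof -
    have "(\<Sum>t<Suc p. F t) = F 0 + (\<Sum>t<p. F (Suc t))" by (rule sum.lessThan_Suc_shift)
    moreover have "(\<Sum>t<Suc p. F t) = (\<Sum>t<p. F t) + F p" by simp
    ultimately show ?thesis using Fp by (simp add: add.commute)
  qed
  have hterm: "s (cis (2 * pi * of_int r * of_nat t / of_nat p)) ((h^^Suc t) v)
      = s (cis (- 2 * pi * of_int r / of_nat p)) (F (Suc t))" for t
  proof -
    have "cis (- 2 * pi * of_int r / of_nat p) * cis (2 * pi * of_int r * of_nat (Suc t) / of_nat p)
        = cis (2 * pi * of_int r * of_nat t / of_nat p)"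
      unfolding cis_mult using p0 by (intro arg_cong[where f=cis]) (simp add: field_simps)
    then show ?thesis unfolding F_def by simp
  qed
  have "h (proj r v) = s (1 / of_nat p) (\<Sum>t<p. s (cis (2 * pi * of_int r * of_nat t / of_nat p)) ((h^^Suc t) v))"
    unfolding proj_def by (simp add: h_scale h_sum)
  also have "... = s (1 / of_nat p) (s (cis (- 2 * pi * of_int r / of_nat p)) (\<Sum>t<p. F (Suc t)))"
    unfolding hterm V.scale_sum_right by simp
  also have "... = s (1 / of_nat p) (s (cis (- 2 * pi * of_int r / of_nat p)) (\<Sum>t<p. F t))"
    by (simp only: shift)
  also have "... = s (cis (- 2 * pi * of_int r / of_nat p)) (proj r v)"
    unfolding proj_def F_def by (simp add: mult.commute)
  finally show ?thesis unfolding tw_space_def by simp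
qed

lemma roots_sum: assumes "0 < t" "t < p"
  shows "(\<Sum>r<p. cis (2 * pi * real r * real t / real p)) = 0"
proof -
  define w where "w = cis (2 * pi * of_nat t / of_nat p)"
  have w1: "w \<noteq> 1"
  proof
    assume "w = 1"
    then have "cos (2 * pi * of_nat t / of_nat p) = 1" unfolding w_def by (metis cis.sel(1) one_complex.sel(1))
    then obtain n :: int where n: "2 * pi * of_nat t / of_nat p = of_int n * (2 * pi)" by (auto simp: cos_one_2pi_int)
    then have "real t = of_int n * real p" using p0 by (simp add: field_simps)
    then have "int t = n * int p" by (metis of_int_eq_iff of_int_mult of_int_of_nat_eq)
    show False
    proof (cases "n \<le> 0")
      case True
      then have "n * int p \<le> 0" using p0 by (simp add: mult_nonpos_nonneg)
      then show False using assms \<open>int t = n * int p\<close> by simp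
    next
      case False
      have "int p \<le> n * int p" using mult_right_mono[of 1 n "int p"] False by simp
      then show False using assms \<open>int t = n * int p\<close> by linarith
    qed
  qed
  have "(\<Sum>r<p. cis (2 * pi * real r * real t / real p)) = (\<Sum>r<p. w ^ r)"
    unfolding w_def DeMoivre by (intro sum.cong refl arg_cong[where f=cis]) (simp add: field_simps)
  also have "... = (w ^ p - 1) / (w - 1)" using w1 by (rule geometric_sum)
  also have "w ^ p = 1" unfolding w_def DeMoivre using p0 by (simp add: cis_multiple_2pi)
  finally show ?thesis by simp
qed

lemma proj_sum: "(\<Sum>r<p. proj (int r) v) = v"
proof -
  have "(\<Sum>r<p. proj (int r) v) = s (1 / of_nat p) (\<Sum>r<p. \<Sum>t<p. s (cis (2 * pi * of_int (int r) * of_nat t / of_nat p)) ((h^^t) v))"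
    unfolding proj_def V.scale_sum_right by simp
  also have "... = s (1 / of_nat p) (\<Sum>t<p. s (\<Sum>r<p. cis (2 * pi * of_int (int r) * of_nat t / of_nat p)) ((h^^t) v))"
    by (subst sum.swap) (simp add: V.scale_sum_left)
  also have "(\<Sum>t<p. s (\<Sum>r<p. cis (2 * pi * of_int (int r) * of_nat t / of_nat p)) ((h^^t) v))
     = (\<Sum>t\<in>{0}. s (\<Sum>r<p. cis (2 * pi * of_int (int r) * of_nat t / of_nat p)) ((h^^t) v))"
    using p0 by (intro sum.mono_neutral_right) (auto simp: roots_sum)
  also have "... = s (of_nat p) v" by simp
  finally show ?thesis using p0 by simp
qed

lemma fsum_bound: "(\<And>i. i \<ge> B \<Longrightarrow> f i = 0) \<Longrightarrow> fsum f = (\<Sum>i<B. f i)"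
  unfolding fsum_def by (intro sum.mono_neutral_left) (auto, meson not_le)

lemma fsum_span: "(\<And>i. f i \<in> M.span X) \<Longrightarrow> fsum f \<in> M.span X"
  unfolding fsum_def by (intro M.span_sum) auto

definition GS :: "'m \<Rightarrow> 'm set" where "GS w = {YM u n w | u n. True}"

lemma GS_in: "YM u n w \<in> M.span (GS w)"
  unfolding GS_def by (intro M.span_base) auto

lemma span_step_hom:
  assumes vr: "v \<in> tw_space s h p r"
  shows "YM v K (YM u N w) \<in> M.span (GS w)"
proof -
  obtain N0 where N0: "\<And>n. n \<ge> N0 \<Longrightarrow> YM u n w = 0" using YM_trunc by blast
  obtain Nv where Nv: "\<And>n. n \<ge> Nv \<Longrightarrow> YM v n w = 0" using YM_trunc by blast
  have "\<forall>N K. nat \<lceil>N0 - N\<rceil> = j \<longrightarrow> YM v K (YM u N w) \<in> M.span (GS w)" for j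
  proof (induction j rule: less_induct)
    case (less j)
    show ?case
    proof (intro allI impI)
      fix N K assume j: "nat \<lceil>N0 - N\<rceil> = j"
      show "YM v K (YM u N w) \<in> M.span (GS w)"
      proof (cases "\<exists>k::int. K = of_int r / of_nat p + of_int k")
        case False
        then show ?thesis using YM_coset[OF vr] M.span_zero by auto
      next
        case True
        then obtain k :: int where k: "K = of_int r / of_nat p + of_int k" by blast
        show ?thesis
        proof (cases "N \<ge> N0")
          case True
          then show ?thesis using N0 M.span_zero by auto
        next
          case False
          define t where "t = nat \<lceil>Nv - K\<rceil>"
          define m where "m = K + of_nat t"
          define l where "l = - int t"
          have mNv: "m \<ge> Nv" unfolding m_def t_def by linarith
          have mc: "\<exists>k::int. m = of_int r / of_nat p + of_int k"
            by (rule exI[of _ "k + int t"]) (simp add: m_def k)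
          define c where "c i = (- 1) ^ i * (complex_of_int l gchoose i)" for i
          define R where "R i = sM (c i) (YM v (K - of_nat i) (YM u (N + of_nat i) w))" for i
          define B where "B = nat \<lceil>N0 - N\<rceil>"
          have B0: "B > 0" unfolding B_def using False by simp
          note bor = YM_bor[OF vr mc, of l u N w]
          have Req: "(\<lambda>i. sM ((-1)^i * (of_int l gchoose i))
                    (YM v (m + of_int l - of_nat i) (YM u (N + of_nat i) w)
                     - sM (sgn_pow l) (YM u (of_int l + N - of_nat i) (YM v (m + of_nat i) w)))) = R"
          proof
            fix i
            have "YM v (m + of_nat i) w = 0" using Nv mNv by simp
            moreover have "m + of_int l - of_nat i = K - of_nat i" unfolding m_def l_def by simp
            ultimately show "sM ((-1)^i * (of_int l gchoose i))
                    (YM v (m + of_int l - of_nat i) (YM u (N + of_nat i) w)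
                     - sM (sgn_pow l) (YM u (of_int l + N - of_nat i) (YM v (m + of_nat i) w))) = R i"
              unfolding R_def c_def by simp
          qed
          have Rz: "R i = 0" if "i \<ge> B" for i
          proof -
            have "N + of_nat i \<ge> N0" using that unfolding B_def by linarith
            then show ?thesis unfolding R_def using N0 by simp
          qed
          have fR: "fsum R = R 0 + (\<Sum>i<B - 1. R (Suc i))"
          proof -
            have "fsum R = (\<Sum>i<Suc (B - 1). R i)" using B0 Rz by (intro fsum_bound) auto
            then show ?thesis by (simp only: sum.lessThan_Suc_shift)
          qed
          have R0: "R 0 = YM v K (YM u N w)" unfolding R_def c_def by simp
          have RS: "R (Suc i) \<in> M.span (GS w)" for i
          proof -
            have "nat \<lceil>N0 - (N + of_nat (Suc i))\<rceil> < j" using j False by linarith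
            then have "YM v (K - of_nat (Suc i)) (YM u (N + of_nat (Suc i)) w) \<in> M.span (GS w)"
              using less by blast
            then show ?thesis unfolding R_def by (rule M.span_scale)
          qed
          have "fsum R \<in> M.span (GS w)"
            using bor[unfolded Req, symmetric] by (auto intro!: fsum_span M.span_scale GS_in)
          then have "R 0 + (\<Sum>i<B - 1. R (Suc i)) \<in> M.span (GS w)" using fR by simp
          moreover have "(\<Sum>i<B - 1. R (Suc i)) \<in> M.span (GS w)" by (intro M.span_sum RS)
          ultimately have "R 0 \<in> M.span (GS w)" using M.span_add_eq2 by blast
          then show ?thesis using R0 by simp
        qed
      qed
    qed
  qed
  then show ?thesis by blast
qed

lemma span_step: "YM v K (YM u N w) \<in> M.span (GS w)"
proof -
  have "YM v K (YM u N w) = (\<Sum>r<p. YM (proj (int r) v) K (YM u N w))"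
    using proj_sum[of v] YM_suml by metis
  also have "... \<in> M.span (GS w)" by (intro M.span_sum span_step_hom[OF proj_tw])
  finally show ?thesis .
qed

lemma span_inv: "x \<in> M.span (GS w) \<Longrightarrow> YM v K x \<in> M.span (GS w)"
proof (induction rule: M.span_induct)
  case base
  show ?case by (rule M.subspaceI) (auto simp: YM_addr YM_scaler intro: M.span_add M.span_scale M.span_zero)
next
  case (step x)
  then obtain u n where "x = YM u n w" unfolding GS_def by blast
  then show ?case using span_step by simp
qed

lemma GS_self: "w \<in> M.span (GS w)"
  using GS_in[of vac "-1" w] by (simp add: YM_vac)

lemma part2:
  fixes g :: "'v \<Rightarrow> 'v" and \<phi> :: "'m \<Rightarrow> 'm" and a :: complex
  assumes irr: "\<forall>W. M.subspace W \<and> (\<forall>u n. YM u n ` W \<subseteq> W) \<longrightarrow> W = {0} \<or> W = UNIV"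
    and glin: "Vector_Spaces.linear s s g" and gp: "g^^p = id"
    and plin: "Vector_Spaces.linear sM sM \<phi>" and pbij: "bij \<phi>"
    and phom: "\<forall>v n w. \<phi> (YM v n w) = YM (g v) n (\<phi> w)"
    and ne: "{w. \<phi> w = sM a w} \<noteq> {0}"
  shows "irr_fixed_submodule sM YM {v. g v = v} {w. \<phi> w = sM a w}"
proof -
  define E where "E = {w. \<phi> w = sM a w}"
  have g_add: "g (x + y) = g x + g y" and g_scale: "g (s c x) = s c (g x)" for x y c
    using glin unfolding Vector_Spaces.linear_iff by auto
  have p_add: "\<phi> (x + y) = \<phi> x + \<phi> y" and p_scale: "\<phi> (sM c x) = sM c (\<phi> x)" for x y c
    using plin unfolding Vector_Spaces.linear_iff by auto
  have phi0: "\<phi> 0 = 0" by (metis add_cancel_right_right p_add)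
  have g0: "g 0 = 0" by (metis add_cancel_right_right g_add)
  have gsum: "g (sum f A) = (\<Sum>x\<in>A. g (f x))" for f and A :: "nat set"
    by (induction A rule: infinite_finite_induct) (auto simp: g_add g0)
  have pt_add: "(\<phi>^^t) (x + y) = (\<phi>^^t) x + (\<phi>^^t) y" for t x y
    by (induction t) (auto simp: p_add)
  have pt_scale: "(\<phi>^^t) (sM c x) = sM c ((\<phi>^^t) x)" for t x c
    by (induction t) (auto simp: p_scale)
  have pt0: "(\<phi>^^t) 0 = 0" for t by (induction t) (auto simp: phi0)
  have sub: "M.subspace E" unfolding E_def
    by (rule M.subspaceI) (auto simp: phi0 p_add p_scale M.scale_right_distrib)
  have inv: "YM u n ` E \<subseteq> E" if "u \<in> {v. g v = v}" for u n
    using that phom unfolding E_def by (auto simp: YM_scaler)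
  have "E \<noteq> {0}" using ne unfolding E_def .
  have minimal: "W' = {0} \<or> W' = E" if W': "W' \<subseteq> E" "M.subspace W'" "\<forall>u\<in>{v. g v = v}. \<forall>n. YM u n ` W' \<subseteq> W'" for W'
  proof (cases "W' = {0}")
    case True then show ?thesis by simp
  next
    case False
    then obtain w' where w': "w' \<in> W'" "w' \<noteq> 0" using M.subspace_0[OF W'(2)] by blast
    have a0: "a \<noteq> 0"
    proof
      assume "a = 0"
      then have "\<phi> w' = \<phi> 0" using w' W'(1) phi0 unfolding E_def by auto
      then show False using w' pbij by (metis bij_pointE)
    qed
    have spanU: "M.span (GS w') = UNIV"
    proof -
      have "M.span (GS w') = {0} \<or> M.span (GS w') = UNIV"
        using irr span_inv by blast
      then show ?thesis using GS_self[of w'] w' by auto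
    qed
    have ptw: "(\<phi>^^t) x = sM (a^t) x" if "x \<in> E" for t x
      using that unfolding E_def by (induction t) (auto simp: p_scale mult.commute)
    have pthom: "(\<phi>^^t) (YM u n x) = YM ((g^^t) u) n ((\<phi>^^t) x)" for t u n x
      using phom by (induction t) auto
    define Q where "Q x = sM (1 / of_nat p) (\<Sum>t<p. sM (inverse a ^ t) ((\<phi>^^t) x))" for x
    have Qw: "Q w = w" if "w \<in> E" for w
    proof -
      have "Q w = sM (1 / of_nat p) (\<Sum>t<p. w)"
        unfolding Q_def using that a0 by (simp add: ptw power_mult_distrib[symmetric])
      also have "... = w" using p0 by (simp add: M.sum_constant_scale)
      finally show ?thesis .
    qed
    have QW: "Q x \<in> W'" for x
    proof -
      have "x \<in> M.span (GS w')" using spanU by simp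
      then show ?thesis
      proof (induction rule: M.span_induct)
        case base
        have Q0: "Q 0 = 0" unfolding Q_def by (simp add: pt0)
        have Q_add: "Q (x + y) = Q x + Q y" for x y
          unfolding Q_def by (simp add: pt_add M.scale_right_distrib sum.distrib)
        have Q_scale: "Q (sM c x) = sM c (Q x)" for c x
          unfolding Q_def by (simp add: pt_scale M.scale_sum_right mult.commute mult.left_commute)
        show ?case
          by (rule M.subspaceI)
             (auto simp: Q0 Q_add Q_scale
                   intro!: M.subspace_0[OF W'(2)] M.subspace_add[OF W'(2)] M.subspace_scale[OF W'(2)])
      next
        case (step x)
        then obtain u n where x: "x = YM u n w'" unfolding GS_def by blast
        define ub where "ub = s (1 / of_nat p) (\<Sum>t<p. (g^^t) u)"
        have gt_add: "(g^^t) (x + y) = (g^^t) x + (g^^t) y" for t x y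
          by (induction t) (auto simp: g_add)
        have gub: "g ub = ub"
        proof -
          have "(\<Sum>t<p. (g^^Suc t) u) = (\<Sum>t<p. (g^^t) u)"
          proof -
            have "(\<Sum>t<Suc p. (g^^t) u) = (g^^0) u + (\<Sum>t<p. (g^^Suc t) u)" by (rule sum.lessThan_Suc_shift)
            moreover have "(\<Sum>t<Suc p. (g^^t) u) = (\<Sum>t<p. (g^^t) u) + (g^^p) u" by simp
            ultimately show ?thesis using gp by (simp add: add.commute)
          qed
          then show ?thesis unfolding ub_def by (simp add: g_scale gsum)
        qed
        have "Q x = sM (1 / of_nat p) (\<Sum>t<p. YM ((g^^t) u) n w')"
        proof -
          have "(\<phi>^^t) w' = sM (a^t) w'" for t using ptw w' W'(1) by blast
          then show ?thesis unfolding Q_def x pthom using a0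
            by (simp add: YM_scaler power_mult_distrib[symmetric])
        qed
        also have "... = YM ub n w'" unfolding ub_def by (simp add: YM_scalel YM_suml)
        also have "... \<in> W'" using W'(3) gub w'(1) by blast
        finally show ?case .
      qed
    qed
    have "E \<subseteq> W'"
    proof
      fix x assume "x \<in> E"
      then have "x = Q x" using Qw by simp
      then show "x \<in> W'" using QW[of x] by simp
    qed
    then show ?thesis using W'(1) by blast
  qed
  show ?thesis unfolding irr_fixed_submodule_def E_def[symmetric]
    using sub \<open>E \<noteq> {0}\<close> inv minimal by blast
qed

end


context VM begin

lemma Lm1: "Y om 0 u = Y u (-2) vac"
proof -
  have "Y (Lop Y om (-1) u) (-1) vac = s 1 (Y u (-2) vac)" using Y_deriv[of u "-1" vac] by simp
  then show ?thesis by (simp add: Lop_def Y_create)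
qed

lemma YM_deriv:
  assumes ur: "u \<in> tw_space s h p r" and mc: "\<exists>k::int. m = of_int r / of_nat p + of_int k"
  shows "YM (Y u (-2) vac) m w = sM (- of_rat m) (YM u (m - 1) w)"
proof -
  note bor = YM_bor[OF ur mc, of "-2" vac 0 w]
  have L: "fsum (\<lambda>i. sM (of_rat (m gchoose i)) (YM (Y u (-2 + int i) vac) (m + 0 - of_nat i) w))
      = YM (Y u (-2) vac) m w + sM (of_rat m) (YM u (m - 1) w)"
  proof -
    have "fsum (\<lambda>i. sM (of_rat (m gchoose i)) (YM (Y u (-2 + int i) vac) (m + 0 - of_nat i) w))
      = (\<Sum>i<2. sM (of_rat (m gchoose i)) (YM (Y u (-2 + int i) vac) (m + 0 - of_nat i) w))"
      by (rule fsum_bound) (simp add: Y_create)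
    also have "... = YM (Y u (-2) vac) m w + sM (of_rat m) (YM u (m - 1) w)"
      by (simp add: numeral_2_eq_2 Y_create)
    finally show ?thesis .
  qed
  have R: "fsum (\<lambda>i. sM ((-1)^i * (of_int (-2) gchoose i))
                    (YM u (m + of_int (-2) - of_nat i) (YM vac (0 + of_nat i) w)
                     - sM (sgn_pow (-2)) (YM vac (of_int (-2) + 0 - of_nat i) (YM u (m + of_nat i) w)))) = 0"
  proof -
    have a: "YM vac (0 + of_nat i) w = 0" for i :: nat
    proof -
      have "(0 + of_nat i :: rat) \<noteq> -1" by simp
      then show ?thesis by (simp only: YM_vac if_False)
    qed
    have b: "YM vac (of_int (-2) + 0 - of_nat i) x = 0" for i :: nat and x
    proof -
      have "(of_int (-2) + 0 - of_nat i :: rat) \<noteq> -1" by simp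
      then show ?thesis by (simp only: YM_vac if_False)
    qed
    have "fsum (\<lambda>i. sM ((-1)^i * (of_int (-2) gchoose i))
                    (YM u (m + of_int (-2) - of_nat i) (YM vac (0 + of_nat i) w)
                     - sM (sgn_pow (-2)) (YM vac (of_int (-2) + 0 - of_nat i) (YM u (m + of_nat i) w))))
        = fsum (\<lambda>i. 0::'m)"
      by (rule arg_cong[where f=fsum], rule ext) (simp only: a b YM_0r M.scale_zero_right diff_zero)
    then show ?thesis by (simp add: fsum_def)
  qed
  have "YM (Y u (-2) vac) m w + sM (of_rat m) (YM u (m - 1) w) = 0"
    using bor L R by simp
  then show ?thesis by (simp add: eq_neg_iff_add_eq_0[symmetric])
qed

lemma om_tw: "om \<in> tw_space s h p 0"
  unfolding tw_space_def by (simp add: h_om)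

lemma comm_L0:
  "YM om 1 (YM u n w) - YM u n (YM om 1 w) = YM (Y om 0 u) (n + 1) w + YM (Y om 1 u) n w"
proof -
  have mc: "\<exists>k::int. (1::rat) = of_int 0 / of_nat p + of_int k" by (rule exI[of _ 1]) simp
  note bor = YM_bor[OF om_tw mc, of 0 u n w]
  have L: "fsum (\<lambda>i. sM (of_rat (1 gchoose i)) (YM (Y om (0 + int i) u) (1 + n - of_nat i) w))
      = YM (Y om 0 u) (n + 1) w + YM (Y om 1 u) n w"
  proof -
    have z: "(1::rat) gchoose i = 0" if "i \<ge> 2" for i
    proof -
      have "(1::rat) gchoose i = of_nat (1 choose i)" by (simp add: binomial_gbinomial)
      then show ?thesis using that by simp
    qed
    have "fsum (\<lambda>i. sM (of_rat (1 gchoose i)) (YM (Y om (0 + int i) u) (1 + n - of_nat i) w))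
      = (\<Sum>i<2. sM (of_rat (1 gchoose i)) (YM (Y om (0 + int i) u) (1 + n - of_nat i) w))"
      by (rule fsum_bound) (simp add: z)
    also have "... = YM (Y om 0 u) (n + 1) w + YM (Y om 1 u) n w"
      by (simp add: numeral_2_eq_2 add.commute)
    finally show ?thesis .
  qed
  have R: "fsum (\<lambda>i. sM ((-1)^i * (of_int 0 gchoose i))
                    (YM om (1 + of_int 0 - of_nat i) (YM u (n + of_nat i) w)
                     - sM (sgn_pow 0) (YM u (of_int 0 + n - of_nat i) (YM om (1 + of_nat i) w))))
      = YM om 1 (YM u n w) - YM u n (YM om 1 w)"
  proof -
    have "fsum (\<lambda>i. sM ((-1)^i * (of_int 0 gchoose i))
                    (YM om (1 + of_int 0 - of_nat i) (YM u (n + of_nat i) w)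
                     - sM (sgn_pow 0) (YM u (of_int 0 + n - of_nat i) (YM om (1 + of_nat i) w))))
      = (\<Sum>i<1. sM ((-1)^i * (of_int 0 gchoose i))
                    (YM om (1 + of_int 0 - of_nat i) (YM u (n + of_nat i) w)
                     - sM (sgn_pow 0) (YM u (of_int 0 + n - of_nat i) (YM om (1 + of_nat i) w))))"
      by (rule fsum_bound) (simp add: gbinomial_0_left)
    also have "... = YM om 1 (YM u n w) - YM u n (YM om 1 w)"
      by (simp add: sgn_pow_def)
    finally show ?thesis .
  qed
  show ?thesis using bor L R by simp
qed

lemma L0_hom:
  assumes ur: "u \<in> tw_space s h p r" and nc: "\<exists>k::int. n = of_int r / of_nat p + of_int k"
    and ud: "Y om 1 u = s (of_int d) u"
  shows "YM om 1 (YM u n w) = YM u n (YM om 1 w) + sM (of_int d - of_rat n - 1) (YM u n w)"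
proof -
  have nc1: "\<exists>k::int. n + 1 = of_int r / of_nat p + of_int k"
    using nc by (metis add.assoc of_int_1 of_int_add)
  have "YM (Y om 0 u) (n + 1) w = sM (- of_rat (n + 1)) (YM u n w)"
    unfolding Lm1 using YM_deriv[OF ur nc1] by simp
  then have "YM om 1 (YM u n w) - YM u n (YM om 1 w) = sM (- of_rat (n + 1)) (YM u n w) + sM (of_int d) (YM u n w)"
    using comm_L0[of u n w] ud by (simp add: YM_scalel)
  also have "... = sM (of_int d - of_rat n - 1) (YM u n w)"
    by (simp add: M.scale_left_distrib[symmetric] of_rat_add)
  finally show ?thesis by (simp add: algebra_simps)
qed

definition HH :: "'v set" where
  "HH = {v. \<exists>r d. v \<in> tw_space s h p r \<and> Y om 1 v = s (of_int d) v}"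

lemma hpow_L0: "(h^^t) (Y om 1 v) = Y om 1 ((h^^t) v)"
  by (induction t) (auto simp: h_hom h_om)

lemma HH_span: "V.span HH = UNIV"
proof -
  have "v \<in> V.span HH" if "Lop Y om 0 v = s (of_int d) v" for v d
  proof -
    have vd: "Y om 1 v = s (of_int d) v" using that by (simp add: Lop_def)
    have "proj r v \<in> HH" for r
    proof -
      have "Y om 1 (proj r v) = s (of_int d) (proj r v)"
        unfolding proj_def
        by (simp add: Y_scaler Y_sumr hpow_L0[symmetric] vd hpow_scale V.scale_sum_right mult.commute)
      then show ?thesis unfolding HH_def using proj_tw by blast
    qed
    then have "(\<Sum>r<p. proj (int r) v) \<in> V.span HH" by (intro V.span_sum V.span_base) auto
    then show ?thesis using proj_sum by simp
  qed
  then have "(\<Union>n::int. {v. Lop Y om 0 v = s (of_int n) v}) \<subseteq> V.span HH" by blast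
  then have "V.span (\<Union>n::int. {v. Lop Y om 0 v = s (of_int n) v}) \<subseteq> V.span HH"
    using V.span_minimal V.subspace_span by blast
  then show ?thesis using Y_span by auto
qed

end


definition ee :: "complex \<Rightarrow> complex" where "ee z = exp (- (2 * of_real pi * \<i> * z))"

lemma ee_add: "ee (a + b) = ee a * ee b"
  unfolding ee_def by (simp add: distrib_left exp_add[symmetric])

lemma ee_real: "ee (of_real x) = cis (- 2 * pi * x)"
  unfolding ee_def cis_conv_exp by (simp add: algebra_simps)

lemma ee_int: "ee (of_int k) = 1"
proof -
  have "ee (of_int k) = ee (of_real (of_int k))" by simp
  also have "... = cis (2 * pi * of_int (- k))" unfolding ee_real by simp
  also have "... = 1" by (rule cis_multiple_2pi) simp
  finally show ?thesis .
qed

lemma ee_neg: "ee a * ee (- a) = 1"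
proof -
  have "ee a * ee (- a) = ee (a + - a)" by (simp only: ee_add)
  then show ?thesis by (simp add: ee_def)
qed

lemma ee_key:
  fixes r k d :: int and p :: nat and lam :: complex
  assumes "p > 0"
  shows "cis (- 2 * pi * of_int r / of_nat p) * ee (lam + of_int d - of_rat (of_int r / of_nat p + of_int k) - 1) = ee lam"
proof -
  have "lam + of_int d - of_rat (of_int r / of_nat p + of_int k) - 1
      = lam + of_real (- (of_int r / of_nat p)) + of_int (d - k - 1)"
    by (simp add: of_rat_add of_rat_divide)
  then have "ee (lam + of_int d - of_rat (of_int r / of_nat p + of_int k) - 1)
      = ee lam * ee (of_real (- (of_int r / of_nat p))) * ee (of_int (d - k - 1))"
    by (simp only: ee_add)
  then have "ee (lam + of_int d - of_rat (of_int r / of_nat p + of_int k) - 1)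
      = ee lam * cis (2 * pi * of_int r / of_nat p)"
    by (simp only: ee_real ee_int) simp
  moreover have "cis (- 2 * pi * of_int r / of_nat p) * cis (2 * pi * of_int r / of_nat p) = 1"
    by (simp add: cis_mult)
  ultimately show ?thesis by (metis mult.assoc mult.commute mult_1)
qed

context VM begin

sublocale MM: vector_space_pair sM sM by unfold_locales
sublocale VMp: vector_space_pair s sM by unfold_locales

lemma part1:
  assumes Mspan: "M.span (\<Union>lam. {w. LM0 om YM w = sM lam w}) = UNIV"
  shows "\<exists>f. tw_iso sM (compose_mod YM h) YM f"
proof -
  define EM where "EM = (\<Union>lam. {w. YM om 1 w = sM lam w})"
  obtain B where B: "B \<subseteq> EM" "M.independent B" "EM \<subseteq> M.span B"
    using M.maximal_independent_subset by blast
  have spanB: "M.span B = UNIV"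
  proof -
    have "M.span EM \<subseteq> M.span B" using B(3) M.span_minimal M.subspace_span by blast
    then show ?thesis using Mspan unfolding EM_def LM0_def by auto
  qed
  define ev where "ev b = (SOME lam. YM om 1 b = sM lam b)" for b
  have evB: "YM om 1 b = sM (ev b) b" if "b \<in> B" for b
  proof -
    have "\<exists>lam. YM om 1 b = sM lam b" using that B(1) unfolding EM_def by blast
    then show ?thesis unfolding ev_def by (rule someI_ex)
  qed
  define f where "f = MM.construct B (\<lambda>b. sM (ee (ev b)) b)"
  define f' where "f' = MM.construct B (\<lambda>b. sM (ee (- ev b)) b)"
  have flin: "Vector_Spaces.linear sM sM f" unfolding f_def by (rule MM.linear_construct[OF B(2)])
  have f'lin: "Vector_Spaces.linear sM sM f'" unfolding f'_def by (rule MM.linear_construct[OF B(2)])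
  have f_add: "f (x + y) = f x + f y" and f_scale: "f (sM a x) = sM a (f x)" for x y a
    using flin unfolding Vector_Spaces.linear_iff by auto
  have f'_add: "f' (x + y) = f' x + f' y" and f'_scale: "f' (sM a x) = sM a (f' x)" for x y a
    using f'lin unfolding Vector_Spaces.linear_iff by auto
  have f0: "f 0 = 0" by (metis add_cancel_right_right f_add)
  have fsum': "f (sum g A) = (\<Sum>a\<in>A. f (g a))" for g and A :: "'m set"
    by (induction A rule: infinite_finite_induct) (auto simp: f_add f0)
  have fB: "f b = sM (ee (ev b)) b" if "b \<in> B" for b
    unfolding f_def by (rule MM.construct_basis[OF B(2) that])
  have f'B: "f' b = sM (ee (- ev b)) b" if "b \<in> B" for b
    unfolding f'_def by (rule MM.construct_basis[OF B(2) that])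
  have f_eig: "f x = sM (ee lam) x" if xl: "YM om 1 x = sM lam x" for x lam
  proof -
    define R where "R = M.representation B x"
    define F where "F = {b. R b \<noteq> 0}"
    have finF: "finite F" unfolding F_def R_def by (rule M.finite_representation)
    have FB: "F \<subseteq> B" unfolding F_def R_def using M.representation_ne_zero by blast
    have xs: "x = (\<Sum>b\<in>F. sM (R b) b)"
      unfolding F_def R_def using M.sum_nonzero_representation_eq[OF B(2)] spanB by simp
    have "YM om 1 x = (\<Sum>b\<in>F. sM (R b * ev b) b)"
      by (subst xs) (use FB in \<open>auto simp: YM_sumr YM_scaler evB intro!: sum.cong\<close>)
    moreover have "sM lam x = (\<Sum>b\<in>F. sM (lam * R b) b)"
      by (subst xs) (simp add: M.scale_sum_right)
    ultimately have "(\<Sum>b\<in>F. sM (R b * ev b) b) - (\<Sum>b\<in>F. sM (lam * R b) b) = 0"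
      using xl by simp
    then have S0: "(\<Sum>b\<in>F. sM (R b * ev b - lam * R b) b) = 0"
      by (simp add: sum_subtractf[symmetric] M.scale_left_diff_distrib)
    have z: "R b * ev b - lam * R b = 0" if "b \<in> F" for b
      using M.independentD[OF B(2) finF FB S0 that] by simp
    have evF: "ev b = lam" if "b \<in> F" for b
    proof -
      have "R b * (ev b - lam) = 0" using z[OF that] by (simp add: algebra_simps)
      then show ?thesis using that unfolding F_def by simp
    qed
    have "f x = (\<Sum>b\<in>F. sM (R b) (f b))"
      by (subst xs) (simp add: fsum' f_scale)
    also have "... = (\<Sum>b\<in>F. sM (ee lam) (sM (R b) b))"
      using FB evF by (auto simp: fB mult.commute intro!: sum.cong)
    also have "... = sM (ee lam) (\<Sum>b\<in>F. sM (R b) b)"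
      by (simp only: M.scale_sum_right)
    also have "... = sM (ee lam) x" using xs by simp
    finally show ?thesis .
  qed
  have inv1: "f' (f x) = x" for x
  proof -
    have "(f' \<circ> f) x = id x"
    proof (rule MM.linear_eq_on[where B=B and f="f' \<circ> f" and g=id])
      show "Vector_Spaces.linear sM sM (f' \<circ> f)" using flin f'lin by (rule Vector_Spaces.linear_compose)
      show "Vector_Spaces.linear sM sM id" by (rule M.linear_id)
      show "x \<in> M.span B" using spanB by simp
      fix b assume "b \<in> B"
      then show "(f' \<circ> f) b = id b" by (simp add: fB f'B f'_scale ee_neg)
    qed
    then show ?thesis by simp
  qed
  have inv2: "f (f' x) = x" for x
  proof -
    have "(f \<circ> f') x = id x"
    proof (rule MM.linear_eq_on[where B=B and f="f \<circ> f'" and g=id])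
      show "Vector_Spaces.linear sM sM (f \<circ> f')" using f'lin flin by (rule Vector_Spaces.linear_compose)
      show "Vector_Spaces.linear sM sM id" by (rule M.linear_id)
      show "x \<in> M.span B" using spanB by simp
      fix b assume "b \<in> B"
      then show "(f \<circ> f') b = id b" by (simp add: fB f'B f_scale ee_neg mult.commute)
    qed
    then show ?thesis by simp
  qed
  have fbij: "bij f" by (rule o_bij[of f']) (auto simp: inv1 inv2)
  have hom_basic: "f (YM (h v) n w) = YM v n (f w)" if vH: "v \<in> HH" and wB: "w \<in> B" for v n w
  proof -
    obtain r d where vr: "v \<in> tw_space s h p r" and vd: "Y om 1 v = s (of_int d) v"
      using vH unfolding HH_def by blast
    have hv: "h v = s (cis (- 2 * pi * of_int r / of_nat p)) v" using vr unfolding tw_space_def by simp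
    show ?thesis
    proof (cases "\<exists>k::int. n = of_int r / of_nat p + of_int k")
      case False
      then show ?thesis using YM_coset[OF vr False] by (simp add: hv YM_scalel f0)
    next
      case True
      then obtain k :: int where k: "n = of_int r / of_nat p + of_int k" by blast
      have "YM om 1 (YM v n w) = sM (ev w) (YM v n w) + sM (of_int d - of_rat n - 1) (YM v n w)"
        using L0_hom[OF vr True vd, of w] evB[OF wB] by (simp add: YM_scaler)
      also have "... = sM (ev w + (of_int d - of_rat n - 1)) (YM v n w)" by (simp only: M.scale_left_distrib)
      also have "ev w + (of_int d - of_rat n - 1) = ev w + of_int d - of_rat n - 1" by (simp add: algebra_simps)
      finally have "YM om 1 (YM v n w) = sM (ev w + of_int d - of_rat n - 1) (YM v n w)" .
      then have fx: "f (YM v n w) = sM (ee (ev w + of_int d - of_rat n - 1)) (YM v n w)" by (rule f_eig)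
      have "f (YM (h v) n w) = sM (cis (- 2 * pi * of_int r / of_nat p) * ee (ev w + of_int d - of_rat n - 1)) (YM v n w)"
        by (simp add: hv YM_scalel f_scale fx)
      also have "... = sM (ee (ev w)) (YM v n w)" unfolding k using ee_key[OF p0] by simp
      also have "... = YM v n (f w)" by (simp add: fB[OF wB] YM_scaler)
      finally show ?thesis .
    qed
  qed
  have hom_w: "f (YM (h v) n w) = YM v n (f w)" if wB: "w \<in> B" for v n w
  proof (rule VMp.linear_eq_on[where B=HH and f="\<lambda>v. f (YM (h v) n w)" and g="\<lambda>v. YM v n (f w)"])
    show "Vector_Spaces.linear s sM (\<lambda>v. f (YM (h v) n w))"
      unfolding Vector_Spaces.linear_iff
      by (simp add: V.vector_space_axioms M.vector_space_axioms h_add h_scale YM_addl YM_scalel f_add f_scale)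
    show "Vector_Spaces.linear s sM (\<lambda>v. YM v n (f w))"
      unfolding Vector_Spaces.linear_iff
      by (simp add: V.vector_space_axioms M.vector_space_axioms YM_addl YM_scalel)
    show "v \<in> V.span HH" using HH_span by simp
    fix b assume "b \<in> HH" then show "f (YM (h b) n w) = YM b n (f w)" using hom_basic wB by blast
  qed
  have hom: "f (YM (h v) n w) = YM v n (f w)" for v n w
  proof (rule MM.linear_eq_on[where B=B and f="\<lambda>w. f (YM (h v) n w)" and g="\<lambda>w. YM v n (f w)"])
    show "Vector_Spaces.linear sM sM (\<lambda>w. f (YM (h v) n w))"
      unfolding Vector_Spaces.linear_iff
      by (simp add: M.vector_space_axioms YM_addr YM_scaler f_add f_scale)
    show "Vector_Spaces.linear sM sM (\<lambda>w. YM v n (f w))"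
      unfolding Vector_Spaces.linear_iff
      by (simp add: M.vector_space_axioms YM_addr YM_scaler f_add f_scale)
    show "w \<in> M.span B" using spanB by simp
    fix b assume "b \<in> B" then show "f (YM (h v) n b) = YM v n (f b)" using hom_w by blast
  qed
  show ?thesis unfolding tw_iso_def compose_mod_def using flin fbij hom by blast
qed

end


lemma aut_pow: assumes "VOA_aut s Y om g" shows "VOA_aut s Y om (g ^^ n)"
proof (induction n)
  case 0
  have "vector_space s" using assms unfolding VOA_aut_def Vector_Spaces.linear_iff by blast
  then show ?case unfolding VOA_aut_def by (simp add: vector_space.linear_id)
next
  case (Suc n)
  have gl: "Vector_Spaces.linear s s g" "bij g" "\<forall>u n v. g (Y u n v) = Y (g u) n (g v)" "g om = om"
    using assms unfolding VOA_aut_def by auto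
  have nl: "Vector_Spaces.linear s s (g^^n)" "bij (g^^n)" "\<forall>u m v. (g^^n) (Y u m v) = Y ((g^^n) u) m ((g^^n) v)" "(g^^n) om = om"
    using Suc unfolding VOA_aut_def by auto
  show ?case unfolding VOA_aut_def funpow.simps(2)
    using Vector_Spaces.linear_compose[OF nl(1) gl(1)] bij_comp[OF nl(2) gl(2)] gl(3,4) nl(3,4) by auto
qed

lemma funpow_id_iter: "(id ^^ n) = id"
  by (induction n) auto

lemma iso_pow:
  assumes "tw_iso sM (compose_mod YM k) YM f"
  shows "tw_iso sM (compose_mod YM (k ^^ m)) YM (f ^^ m)"
proof (induction m)
  case 0
  have "vector_space sM" using assms unfolding tw_iso_def Vector_Spaces.linear_iff by blast
  then show ?case unfolding tw_iso_def compose_mod_def by (simp add: vector_space.linear_id)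
next
  case (Suc m)
  have fl: "Vector_Spaces.linear sM sM f" "bij f" "\<forall>v n w. f (YM (k v) n w) = YM v n (f w)"
    using assms unfolding tw_iso_def compose_mod_def by auto
  have ml: "Vector_Spaces.linear sM sM (f^^m)" "bij (f^^m)" "\<forall>v n w. (f^^m) (YM ((k^^m) v) n w) = YM v n ((f^^m) w)"
    using Suc unfolding tw_iso_def compose_mod_def by auto
  have "(f ^^ Suc m) (YM ((k ^^ Suc m) v) n w) = YM v n ((f ^^ Suc m) w)" for v n w
  proof -
    have "(f ^^ Suc m) (YM ((k ^^ Suc m) v) n w) = f ((f^^m) (YM ((k^^m) (k v)) n w))"
    proof -
      have kS: "k ^^ Suc m = k ^^ m \<circ> k" by (rule funpow_Suc_right)
      show ?thesis unfolding kS by (simp only: funpow.simps(2) o_apply)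
    qed
    also have "... = f (YM (k v) n ((f^^m) w))" using ml(3) by simp
    also have "... = YM v n ((f ^^ Suc m) w)" using fl(3) by simp
    finally show ?thesis .
  qed
  then show ?case unfolding tw_iso_def compose_mod_def funpow.simps(2)
    using Vector_Spaces.linear_compose[OF ml(1) fl(1)] bij_comp[OF ml(2) fl(2)] by auto
qed

theorem corollary5p8:
  fixes s :: "complex \<Rightarrow> 'v::ab_group_add \<Rightarrow> 'v"
    and Y :: "'v \<Rightarrow> int \<Rightarrow> 'v \<Rightarrow> 'v"
    and vac om :: 'v and c :: complex
    and g :: "'v \<Rightarrow> 'v" and p i :: nat
    and sM :: "complex \<Rightarrow> 'm::ab_group_add \<Rightarrow> 'm"
    and YM :: "'v \<Rightarrow> rat \<Rightarrow> 'm \<Rightarrow> 'm"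
  assumes "VOA s Y vac om c"
    and "simple_VOA s Y"
    and "VOA_aut s Y om g"
    and "prime p" and "g ^^ p = id" and "g \<noteq> id"
    and "1 \<le> i" and "i \<le> p - 1"
    and "tw_rational TYPE('m) s Y vac om (g ^^ i) p"
    and "irreducible_tw_module s Y vac om (g ^^ i) p sM YM"
  shows "stab_mod sM YM (range (\<lambda>k. g ^^ k)) = range (\<lambda>k. g ^^ k)
    \<and> (\<forall>\<phi>. Vector_Spaces.linear sM sM \<phi> \<and> bij \<phi>
           \<and> (\<forall>v n w. \<phi> (YM v n w) = YM (g v) n (\<phi> w))
         \<longrightarrow> (\<forall>a. {w. \<phi> w = sM a w} \<noteq> {0}
               \<longrightarrow> irr_fixed_submodule sM YM {v. g v = v} {w. \<phi> w = sM a w}))"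
proof -
  note A = assms
  have p0: "p > 0" using A(4) by (simp add: prime_gt_0_nat)
  have hp: "(g ^^ i) ^^ p = id"
  proof -
    have "(g ^^ i) ^^ p = g ^^ (p * i)" by (simp add: funpow_mult mult.commute)
    also have "... = (g ^^ p) ^^ i" by (simp add: funpow_mult)
    finally show ?thesis using A(5) by (simp add: funpow_id_iter)
  qed
  have tm: "tw_module s Y vac om (g ^^ i) p sM YM" and
    irr: "\<forall>W. module.subspace sM W \<and> (\<forall>u n. YM u n ` W \<subseteq> W) \<longrightarrow> W = {0} \<or> W = UNIV"
    using A(10) unfolding irreducible_tw_module_def by auto
  have wtm: "weak_tw_module s Y vac (g ^^ i) p sM YM" and
    Mspan: "module.span sM (\<Union>lam. {w. LM0 om YM w = sM lam w}) = UNIV"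
    using tm unfolding tw_module_def by auto
  interpret VM s Y vac om c "g ^^ i" p sM YM
    by unfold_locales (use A(1) aut_pow[OF A(3)] hp p0 wtm in auto)
  obtain f where f: "tw_iso sM (compose_mod YM (g ^^ i)) YM f" using part1 Mspan by blast
  have stab: "\<exists>f. tw_iso sM (compose_mod YM (g ^^ k)) YM f" for k
  proof -
    have "coprime p i"
      using A(4) A(7) A(8) p0 by (intro prime_imp_coprime) (auto dest: dvd_imp_le)
    then have gi: "gcd i p = 1" by (simp add: coprime_iff_gcd_eq_1 gcd.commute)
    obtain x y where xy: "i * x = p * y + gcd i p" using bezout_nat[of i p] A(7) by auto
    have "g ^^ (i * (x * k)) = g ^^ (p * (y * k) + k)"
      using xy gi by (metis add_mult_distrib mult.assoc mult_1)
    also have "... = g ^^ k" by (simp add: funpow_add funpow_mult[symmetric] A(5) funpow_id_iter)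
    finally have "(g ^^ i) ^^ (x * k) = g ^^ k" by (simp add: funpow_mult)
    then show ?thesis using iso_pow[OF f, of "x * k"] by metis
  qed
  have P1: "stab_mod sM YM (range (\<lambda>k. g ^^ k)) = range (\<lambda>k. g ^^ k)"
    unfolding stab_mod_def using stab by blast
  have glin: "Vector_Spaces.linear s s g" using A(3) unfolding VOA_aut_def by auto
  show ?thesis using P1 part2[OF irr glin A(5)] by blast
qed

end
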